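(* Let $(Y,D)$ be binary random variables and $X_0,X_1$ observed random vectors. Consider the binary Roy model with $Y_0$ independent of $X_1$ conditionally on $X_0$ and $Y_1$ independent of $X_0$ conditionally on $X_1$. Fix $(x_0,x_1)$ in the support of $(X_0,X_1)$ and define (assumed well defined) $\underline q^0(x_0)=\inf\{\mathbb P(Y=1\mid X_0=x_0,X_1=\tilde x_1):\tilde x_1\in\mathrm{Supp}(X_1\mid X_0=x_0)\}$, $\underline q^1(x_1)=\inf\{\mathbb P(Y=1\mid X_0=\tilde x_0,X_1=x_1):\tilde x_0\in\mathrm{Supp}(X_0\mid X_1=x_1)\}$, $\bar q^0_{10}(x_0)=\sup\{\mathbb P(Y=1,D=0\mid X_0=x_0,X_1=\tilde x_1):\tilde x_1\in\mathrm{Supp}(X_1\mid X_0=x_0)\}$, $\bar q^1_{11}(x_1)=\sup\{\mathbb P(Y=1,D=1\mid X_0=\tilde x_0,X_1=x_1):\tilde x_0\in\mathrm{Supp}(X_0\mid X_1=x_1)\}$. Writing $\pi=\mathbb P(Y=1\mid X_0=x_0,X_1=x_1)$, sharp bounds for the conditional distributions of potential outcomes are $$\frac{\pi-\underline q^0(x_0)}{1-\underline q^0(x_0)}\le \mathbb P(Y_1=1\mid Y_0=0,X_0=x_0,X_1=x_1)\le \frac{\pi-\bar q^0_{10}(x_0)}{1-\bar q^0_{10}(x_0)},$$ $$\frac{\pi-\underline q^1(x_1)}{1-\underline q^1(x_1)}\le \mathbb P(Y_0=1\mid Y_1=0,X_0=x_0,X_1=x_1)\le \frac{\pi-\bar q^1_{11}(x_1)}{1-\bar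 q^1_{11}(x_1)}.$$
   Context: Binary Roy model: $Y_0,Y_1\in\{0,1\}$ unobserved potential outcomes, $Y=Y_1D+Y_0(1-D)$, and almost surely $Y_1>Y_0\Rightarrow D=1$, $Y_1<Y_0\Rightarrow D=0$. $X_d$ are sector-specific covariates entering $Y_d$ but not $Y_{1-d}$. Sharp means the bounds hold for every $(Y_0,Y_1)$ compatible with the model and the conditional distribution of $(Y,D)$ given $(X_0,X_1)$, and the endpoints are attained by such compatible $(Y_0,Y_1)$. Denominators are assumed nonzero. *)

theory Defs
  imports "HOL-Probability.Probability"
begin

text \<open>For every covariate value
  (x0,x1) in the support S of (X0,X1), a structure M gives the conditional joint
  law of the latent triple (Y0, Y1, D) (booleans, True = 1). The observed data
  are the conditional laws obs x0 x1 of (Y, D) given (X0,X1) = (x0,x1).\<close>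

definition roy_outcome :: "bool \<Rightarrow> bool \<Rightarrow> bool \<Rightarrow> bool" where
  "roy_outcome y0 y1 d \<longleftrightarrow> ((y1 \<and> \<not> y0) \<longrightarrow> d) \<and> ((y0 \<and> \<not> y1) \<longrightarrow> \<not> d)"

definition observed :: "bool \<times> bool \<times> bool \<Rightarrow> bool \<times> bool" where
  "observed = (\<lambda>(y0, y1, d). (if d then y1 else y0, d))"

text \<open>M is compatible with the model and with the observed conditional law:
  Roy selection holds almost surely, (Y,D) has the observed conditional law,
  Y0 is independent of X1 given X0, and Y1 is independent of X0 given X1.\<close>
definition compatible ::
  "('a \<times> 'b) set \<Rightarrow> ('a \<Rightarrow> 'b \<Rightarrow> (bool \<times> bool) pmf)
    \<Rightarrow> ('a \<Rightarrow> 'b \<Rightarrow> (bool \<times> bool \<times> bool) pmf) \<Rightarrow> bool" where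
  "compatible S obs M \<longleftrightarrow>
     (\<forall>x0 x1. (x0, x1) \<in> S \<longrightarrow>
        (\<forall>y0 y1 d. (y0, y1, d) \<in> set_pmf (M x0 x1) \<longrightarrow> roy_outcome y0 y1 d))
   \<and> (\<forall>x0 x1. (x0, x1) \<in> S \<longrightarrow> map_pmf observed (M x0 x1) = obs x0 x1)
   \<and> (\<forall>x0 x1 x1'. (x0, x1) \<in> S \<longrightarrow> (x0, x1') \<in> S \<longrightarrow>
        map_pmf fst (M x0 x1) = map_pmf fst (M x0 x1'))
   \<and> (\<forall>x0 x0' x1. (x0, x1) \<in> S \<longrightarrow> (x0', x1) \<in> S \<longrightarrow>
        map_pmf (fst \<circ> snd) (M x0 x1) = map_pmf (fst \<circ> snd) (M x0' x1))"

definition supp1 :: "('a \<times> 'b) set \<Rightarrow> 'a \<Rightarrow> 'b set" where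
  "supp1 S x0 = {x1. (x0, x1) \<in> S}"

definition supp0 :: "('a \<times> 'b) set \<Rightarrow> 'b \<Rightarrow> 'a set" where
  "supp0 S x1 = {x0. (x0, x1) \<in> S}"

definition pY1 :: "('a \<Rightarrow> 'b \<Rightarrow> (bool \<times> bool) pmf) \<Rightarrow> 'a \<Rightarrow> 'b \<Rightarrow> real" where
  "pY1 obs x0 x1 = measure_pmf.prob (obs x0 x1) {(y, d). y}"

definition pY1D0 :: "('a \<Rightarrow> 'b \<Rightarrow> (bool \<times> bool) pmf) \<Rightarrow> 'a \<Rightarrow> 'b \<Rightarrow> real" where
  "pY1D0 obs x0 x1 = measure_pmf.prob (obs x0 x1) {(y, d). y \<and> \<not> d}"

definition pY1D1 :: "('a \<Rightarrow> 'b \<Rightarrow> (bool \<times> bool) pmf) \<Rightarrow> 'a \<Rightarrow> 'b \<Rightarrow> real" where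
  "pY1D1 obs x0 x1 = measure_pmf.prob (obs x0 x1) {(y, d). y \<and> d}"

definition q0_low :: "('a \<times> 'b) set \<Rightarrow> ('a \<Rightarrow> 'b \<Rightarrow> (bool \<times> bool) pmf) \<Rightarrow> 'a \<Rightarrow> real" where
  "q0_low S obs x0 = (INF x1 \<in> supp1 S x0. pY1 obs x0 x1)"

definition q1_low :: "('a \<times> 'b) set \<Rightarrow> ('a \<Rightarrow> 'b \<Rightarrow> (bool \<times> bool) pmf) \<Rightarrow> 'b \<Rightarrow> real" where
  "q1_low S obs x1 = (INF x0 \<in> supp0 S x1. pY1 obs x0 x1)"

definition q0_10_up :: "('a \<times> 'b) set \<Rightarrow> ('a \<Rightarrow> 'b \<Rightarrow> (bool \<times> bool) pmf) \<Rightarrow> 'a \<Rightarrow> real" where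
  "q0_10_up S obs x0 = (SUP x1 \<in> supp1 S x0. pY1D0 obs x0 x1)"

definition q1_11_up :: "('a \<times> 'b) set \<Rightarrow> ('a \<Rightarrow> 'b \<Rightarrow> (bool \<times> bool) pmf) \<Rightarrow> 'b \<Rightarrow> real" where
  "q1_11_up S obs x1 = (SUP x0 \<in> supp0 S x1. pY1D1 obs x0 x1)"

definition pY1_given_Y0_0 ::
  "('a \<Rightarrow> 'b \<Rightarrow> (bool \<times> bool \<times> bool) pmf) \<Rightarrow> 'a \<Rightarrow> 'b \<Rightarrow> real" where
  "pY1_given_Y0_0 M x0 x1 =
     measure_pmf.prob (M x0 x1) {(y0, y1, d). \<not> y0 \<and> y1}
     / measure_pmf.prob (M x0 x1) {(y0, y1, d). \<not> y0}"

definition pY0_given_Y1_0 ::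
  "('a \<Rightarrow> 'b \<Rightarrow> (bool \<times> bool \<times> bool) pmf) \<Rightarrow> 'a \<Rightarrow> 'b \<Rightarrow> real" where
  "pY0_given_Y1_0 M x0 x1 =
     measure_pmf.prob (M x0 x1) {(y0, y1, d). y0 \<and> \<not> y1}
     / measure_pmf.prob (M x0 x1) {(y0, y1, d). \<not> y1}"

end

theory Submission imports Defs begin

lemma UNIV3: "(UNIV :: (bool\<times>bool\<times>bool) set) =
  {(True,True,True),(True,True,False),(True,False,True),(True,False,False),
   (False,True,True),(False,True,False),(False,False,True),(False,False,False)}"
  by auto

lemma UNIV2: "(UNIV :: (bool\<times>bool) set) = {(True,True),(True,False),(False,True),(False,False)}"
  by auto

lemma prob3: "measure_pmf.prob (M :: (bool\<times>bool\<times>bool) pmf) A =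
  (\<Sum>x\<in>{(True,True,True),(True,True,False),(True,False,True),(True,False,False),
   (False,True,True),(False,True,False),(False,False,True),(False,False,False)}. if x \<in> A then pmf M x else 0)"
proof -
  have "measure_pmf.prob M A = sum (pmf M) A" by (rule measure_measure_pmf_finite) simp
  also have "\<dots> = (\<Sum>x\<in>UNIV. if x \<in> A then pmf M x else 0)"
    by (simp add: sum.If_cases)
  finally show ?thesis by (simp only: UNIV3)
qed

lemma prob2: "measure_pmf.prob (M :: (bool\<times>bool) pmf) A =
  (\<Sum>x\<in>{(True,True),(True,False),(False,True),(False,False)}. if x \<in> A then pmf M x else 0)"
proof -
  have "measure_pmf.prob M A = sum (pmf M) A" by (rule measure_measure_pmf_finite) simp
  also have "\<dots> = (\<Sum>x\<in>UNIV. if x \<in> A then pmf M x else 0)"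
    by (simp add: sum.If_cases)
  finally show ?thesis by (simp only: UNIV2)
qed

lemma probb: "measure_pmf.prob (M :: bool pmf) A =
  (\<Sum>x\<in>{True,False}. if x \<in> A then pmf M x else 0)"
proof -
  have "measure_pmf.prob M A = sum (pmf M) A" by (rule measure_measure_pmf_finite) simp
  also have "\<dots> = (\<Sum>x\<in>UNIV. if x \<in> A then pmf M x else 0)"
    by (simp add: sum.If_cases)
  finally show ?thesis by (simp only: UNIV_bool) (simp add: add.commute)
qed

lemma sum1_3: "(\<Sum>x\<in>{(True,True,True),(True,True,False),(True,False,True),(True,False,False),
   (False,True,True),(False,True,False),(False,False,True),(False,False,False)}. pmf (M :: (bool\<times>bool\<times>bool) pmf) x) = 1"
proof -
  have "sum (pmf M) UNIV = 1" by (rule sum_pmf_eq_1) auto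
  thus ?thesis by (simp only: UNIV3)
qed

lemma sum1_2: "(\<Sum>x\<in>{(True,True),(True,False),(False,True),(False,False)}. pmf (M :: (bool\<times>bool) pmf) x) = 1"
proof -
  have "sum (pmf M) UNIV = 1" by (rule sum_pmf_eq_1) auto
  thus ?thesis by (simp only: UNIV2)
qed

lemma pmf_bind2: "pmf (bind_pmf (Q :: (bool\<times>bool) pmf) K) x =
   (\<Sum>z\<in>{(True,True),(True,False),(False,True),(False,False)}. pmf (K z) x * pmf Q z)"
  unfolding pmf_bind
  by (rule integral_measure_pmf_real) (auto simp: UNIV2[symmetric])

definition Kk :: "real \<Rightarrow> real \<Rightarrow> bool \<times> bool \<Rightarrow> (bool \<times> bool \<times> bool) pmf" where
  "Kk \<alpha> \<beta> z = (if fst z then (if snd z then map_pmf (\<lambda>c. (c,True,True)) (bernoulli_pmf \<beta>)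
      else map_pmf (\<lambda>c. (True,c,False)) (bernoulli_pmf \<alpha>)) else return_pmf (False,False,snd z))"

lemma test: "0 \<le> \<alpha> \<Longrightarrow> \<alpha> \<le> 1 \<Longrightarrow> 0 \<le> \<beta> \<Longrightarrow> \<beta> \<le> 1 \<Longrightarrow> 
  pmf (bind_pmf Q (Kk \<alpha> \<beta>)) (True,True,True) = \<beta> * pmf Q (True,True)"
  by (simp add: pmf_bind2 Kk_def pmf_map probb)

lemma Kk_roy: "x \<in> set_pmf (Kk \<alpha> \<beta> z) \<Longrightarrow> roy_outcome (fst x) (fst (snd x)) (snd (snd x))"
  by (auto simp: Kk_def roy_outcome_def split: if_splits)

lemma Kk_obs: "map_pmf observed (Kk \<alpha> \<beta> z) = return_pmf z"
  by (cases z) (auto simp: Kk_def map_pmf_comp observed_def)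

lemma build:
  fixes Q :: "(bool \<times> bool) pmf"
  assumes "pmf Q (True,False) \<le> s0" "s0 \<le> pmf Q (True,True) + pmf Q (True,False)"
    "pmf Q (True,True) \<le> s1" "s1 \<le> pmf Q (True,True) + pmf Q (True,False)"
  defines "N \<equiv> bind_pmf Q (Kk ((s1 - pmf Q (True,True)) / pmf Q (True,False))
                              ((s0 - pmf Q (True,False)) / pmf Q (True,True)))"
  shows "\<forall>y0 y1 d. (y0,y1,d) \<in> set_pmf N \<longrightarrow> roy_outcome y0 y1 d"
    "map_pmf observed N = Q" "map_pmf fst N = bernoulli_pmf s0"
    "map_pmf (fst \<circ> snd) N = bernoulli_pmf s1"
proof -
  define a where "a = pmf Q (True,True)"
  define b where "b = pmf Q (True,False)"
  define \<alpha> where "\<alpha> = (s1 - a) / b"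
  define \<beta> where "\<beta> = (s0 - b) / a"
  have N: "N = bind_pmf Q (Kk \<alpha> \<beta>)" unfolding N_def \<alpha>_def \<beta>_def a_def b_def ..
  have a0: "a \<ge> 0" "b \<ge> 0" unfolding a_def b_def by simp_all
  have al: "0 \<le> \<alpha>" "\<alpha> \<le> 1" "b * \<alpha> = s1 - a" using assms(3,4) a0 unfolding \<alpha>_def a_def[symmetric] b_def[symmetric]
    by (auto simp: divide_simps)
  have be: "0 \<le> \<beta>" "\<beta> \<le> 1" "a * \<beta> = s0 - b" using assms(1,2) a0 unfolding \<beta>_def a_def[symmetric] b_def[symmetric]
    by (auto simp: divide_simps)
  show "\<forall>y0 y1 d. (y0,y1,d) \<in> set_pmf N \<longrightarrow> roy_outcome y0 y1 d"
    unfolding N using Kk_roy by fastforce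
  show "map_pmf observed N = Q"
    unfolding N by (simp add: map_bind_pmf Kk_obs bind_return_pmf')
  have p: "pmf N (True,True,True) = \<beta> * a" "pmf N (False,True,True) = (1-\<beta>) * a"
     "pmf N (True,True,False) = \<alpha> * b" "pmf N (True,False,False) = (1-\<alpha>) * b"
     "pmf N (True,False,True) = 0" "pmf N (False,True,False) = 0"
     "pmf N (False,False,True) = pmf Q (False,True)" "pmf N (False,False,False) = pmf Q (False,False)"
    unfolding N a_def b_def using al be by (simp_all add: pmf_bind2 Kk_def pmf_map probb)
  have s: "pmf Q (True,True) + pmf Q (True,False) + pmf Q (False,True) + pmf Q (False,False) = 1"
    using sum1_2[of Q] by simp
  have s01: "0 \<le> s0" "s0 \<le> 1" "0 \<le> s1" "s1 \<le> 1" using assms(1-4) s a0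
    unfolding a_def b_def by (smt (verit) pmf_nonneg)+
  show "map_pmf fst N = bernoulli_pmf s0"
  proof (rule pmf_eqI)
    fix x show "pmf (map_pmf fst N) x = pmf (bernoulli_pmf s0) x"
      using s01 be s a0 by (cases x) (simp_all add: pmf_map prob3 p a_def b_def algebra_simps)
  qed
  show "map_pmf (fst \<circ> snd) N = bernoulli_pmf s1"
  proof (rule pmf_eqI)
    fix x show "pmf (map_pmf (fst \<circ> snd) N) x = pmf (bernoulli_pmf s1) x"
      using s01 al s a0 by (cases x) (simp_all add: pmf_map prob3 p a_def b_def algebra_simps)
  qed
qed

definition P0 :: "(bool \<times> bool \<times> bool) pmf \<Rightarrow> real" where
  "P0 M = measure_pmf.prob M {(y0, y1, d). y0}"
definition P1 :: "(bool \<times> bool \<times> bool) pmf \<Rightarrow> real" where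
  "P1 M = measure_pmf.prob M {(y0, y1, d). y1}"

lemma P0_marg: "P0 M = measure_pmf.prob (map_pmf fst M) {True}"
  unfolding P0_def by (simp add: prob3)
lemma P1_marg: "P1 M = measure_pmf.prob (map_pmf (fst \<circ> snd) M) {True}"
  unfolding P1_def by (simp add: prob3)

lemma point_facts:
  fixes M :: "(bool \<times> bool \<times> bool) pmf"
  assumes roy: "\<forall>y0 y1 d. (y0,y1,d) \<in> set_pmf M \<longrightarrow> roy_outcome y0 y1 d"
    and ob: "map_pmf observed M = Q"
  shows "measure_pmf.prob M {(y0, y1, d). \<not> y0 \<and> y1} = measure_pmf.prob Q {(y, d). y} - P0 M"
    "measure_pmf.prob M {(y0, y1, d). \<not> y0} = 1 - P0 M"
    "measure_pmf.prob Q {(y, d). y \<and> \<not> d} \<le> P0 M" "P0 M \<le> measure_pmf.prob Q {(y, d). y}"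
    "measure_pmf.prob M {(y0, y1, d). y0 \<and> \<not> y1} = measure_pmf.prob Q {(y, d). y} - P1 M"
    "measure_pmf.prob M {(y0, y1, d). \<not> y1} = 1 - P1 M"
    "measure_pmf.prob Q {(y, d). y \<and> d} \<le> P1 M" "P1 M \<le> measure_pmf.prob Q {(y, d). y}"
proof -
  have z1: "pmf M (False,True,False) = 0" using roy by (auto simp: set_pmf_iff roy_outcome_def)
  have z2: "pmf M (True,False,True) = 0" using roy by (auto simp: set_pmf_iff roy_outcome_def)
  have q: "pmf Q z = measure_pmf.prob M (observed -` {z})" for z
    using ob pmf_map by metis
  have q1: "pmf Q (True,True) = pmf M (True,True,True) + pmf M (False,True,True)"
    "pmf Q (True,False) = pmf M (True,True,False) + pmf M (True,False,False)"
    "pmf Q (False,True) = pmf M (False,False,True)"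
    "pmf Q (False,False) = pmf M (False,False,False)"
    by (simp_all add: q prob3 observed_def z1 z2)
  have s: "pmf M (True,True,True) + pmf M (True,True,False) + pmf M (True,False,False) +
    pmf M (False,True,True) + pmf M (False,False,True) + pmf M (False,False,False) = 1"
    using sum1_3[of M] z1 z2 by simp
  have nn: "\<And>x. pmf M x \<ge> 0" by simp
  note nn[of "(True,True,True)"] nn[of "(True,True,False)"] nn[of "(True,False,False)"]
    nn[of "(False,True,True)"] nn[of "(False,False,True)"] nn[of "(False,False,False)"]
  then show "measure_pmf.prob M {(y0, y1, d). \<not> y0 \<and> y1} = measure_pmf.prob Q {(y, d). y} - P0 M"
    "measure_pmf.prob M {(y0, y1, d). \<not> y0} = 1 - P0 M"
    "measure_pmf.prob Q {(y, d). y \<and> \<not> d} \<le> P0 M" "P0 M \<le> measure_pmf.prob Q {(y, d). y}"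
    "measure_pmf.prob M {(y0, y1, d). y0 \<and> \<not> y1} = measure_pmf.prob Q {(y, d). y} - P1 M"
    "measure_pmf.prob M {(y0, y1, d). \<not> y1} = 1 - P1 M"
    "measure_pmf.prob Q {(y, d). y \<and> d} \<le> P1 M" "P1 M \<le> measure_pmf.prob Q {(y, d). y}"
    using s by (simp_all add: prob3 prob2 P0_def P1_def q1 z1 z2)
qed

definition mk where
  "mk S obs f0 f1 x0 x1 = (if (x0, x1) \<in> S then
     bind_pmf (obs x0 x1) (Kk ((f1 x0 x1 - pmf (obs x0 x1) (True,True)) / pmf (obs x0 x1) (True,False))
                              ((f0 x0 x1 - pmf (obs x0 x1) (True,False)) / pmf (obs x0 x1) (True,True)))
     else return_pmf (False,False,False))"

lemma pY_pmf: "pY1 obs x0 x1 = pmf (obs x0 x1) (True,True) + pmf (obs x0 x1) (True,False)"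
  "pY1D0 obs x0 x1 = pmf (obs x0 x1) (True,False)"
  "pY1D1 obs x0 x1 = pmf (obs x0 x1) (True,True)"
  by (simp_all add: pY1_def pY1D0_def pY1D1_def prob2)

lemma mk_facts:
  assumes bnd: "\<And>x0 x1. (x0,x1) \<in> S \<Longrightarrow> pY1D0 obs x0 x1 \<le> f0 x0 x1 \<and> f0 x0 x1 \<le> pY1 obs x0 x1
        \<and> pY1D1 obs x0 x1 \<le> f1 x0 x1 \<and> f1 x0 x1 \<le> pY1 obs x0 x1"
    and dep0: "\<And>x0 x1 x1'. (x0,x1) \<in> S \<Longrightarrow> (x0,x1') \<in> S \<Longrightarrow> f0 x0 x1 = f0 x0 x1'"
    and dep1: "\<And>x0 x0' x1. (x0,x1) \<in> S \<Longrightarrow> (x0',x1) \<in> S \<Longrightarrow> f1 x0 x1 = f1 x0' x1"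
  shows "compatible S obs (mk S obs f0 f1)"
    "\<And>x0 x1. (x0,x1) \<in> S \<Longrightarrow> P0 (mk S obs f0 f1 x0 x1) = f0 x0 x1"
    "\<And>x0 x1. (x0,x1) \<in> S \<Longrightarrow> P1 (mk S obs f0 f1 x0 x1) = f1 x0 x1"
proof -
  have B: "(\<forall>y0 y1 d. (y0,y1,d) \<in> set_pmf (mk S obs f0 f1 x0 x1) \<longrightarrow> roy_outcome y0 y1 d)
    \<and> map_pmf observed (mk S obs f0 f1 x0 x1) = obs x0 x1
    \<and> map_pmf fst (mk S obs f0 f1 x0 x1) = bernoulli_pmf (f0 x0 x1)
    \<and> map_pmf (fst \<circ> snd) (mk S obs f0 f1 x0 x1) = bernoulli_pmf (f1 x0 x1)"
    if "(x0,x1) \<in> S" for x0 x1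
  proof -
    have "pmf (obs x0 x1) (True,False) \<le> f0 x0 x1" "f0 x0 x1 \<le> pmf (obs x0 x1) (True,True) + pmf (obs x0 x1) (True,False)"
      "pmf (obs x0 x1) (True,True) \<le> f1 x0 x1" "f1 x0 x1 \<le> pmf (obs x0 x1) (True,True) + pmf (obs x0 x1) (True,False)"
      using bnd[OF that] by (simp_all add: pY_pmf)
    from build[OF this] show ?thesis using that unfolding mk_def by simp
  qed
  show "compatible S obs (mk S obs f0 f1)"
    unfolding compatible_def using B dep0 dep1 by metis
  show "P0 (mk S obs f0 f1 x0 x1) = f0 x0 x1" if "(x0,x1) \<in> S" for x0 x1
  proof -
    have "0 \<le> f0 x0 x1" "f0 x0 x1 \<le> 1" using bnd[OF that]
      by (smt (verit) measure_nonneg pY1D0_def measure_pmf.prob_le_1 pY1_def)+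
    then show ?thesis using B[OF that] by (simp add: P0_marg measure_pmf_single)
  qed
  show "P1 (mk S obs f0 f1 x0 x1) = f1 x0 x1" if "(x0,x1) \<in> S" for x0 x1
  proof -
    have "0 \<le> f1 x0 x1" "f1 x0 x1 \<le> 1" using bnd[OF that]
      by (smt (verit) measure_nonneg pY1D1_def measure_pmf.prob_le_1 pY1_def)+
    then show ?thesis using B[OF that] by (simp add: P1_marg measure_pmf_single)
  qed
qed

lemma compat_facts:
  assumes "compatible S obs M" "(x0,x1) \<in> S"
  shows "pY1_given_Y0_0 M x0 x1 = (pY1 obs x0 x1 - P0 (M x0 x1)) / (1 - P0 (M x0 x1))"
    "pY0_given_Y1_0 M x0 x1 = (pY1 obs x0 x1 - P1 (M x0 x1)) / (1 - P1 (M x0 x1))"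
    "pY1D0 obs x0 x1 \<le> P0 (M x0 x1)" "P0 (M x0 x1) \<le> pY1 obs x0 x1"
    "pY1D1 obs x0 x1 \<le> P1 (M x0 x1)" "P1 (M x0 x1) \<le> pY1 obs x0 x1"
proof -
  have r: "\<forall>y0 y1 d. (y0,y1,d) \<in> set_pmf (M x0 x1) \<longrightarrow> roy_outcome y0 y1 d"
    and o: "map_pmf observed (M x0 x1) = obs x0 x1" using assms unfolding compatible_def by auto
  note f = point_facts[OF r o]
  show "pY1_given_Y0_0 M x0 x1 = (pY1 obs x0 x1 - P0 (M x0 x1)) / (1 - P0 (M x0 x1))"
    "pY0_given_Y1_0 M x0 x1 = (pY1 obs x0 x1 - P1 (M x0 x1)) / (1 - P1 (M x0 x1))"
    "pY1D0 obs x0 x1 \<le> P0 (M x0 x1)" "P0 (M x0 x1) \<le> pY1 obs x0 x1"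
    "pY1D1 obs x0 x1 \<le> P1 (M x0 x1)" "P1 (M x0 x1) \<le> pY1 obs x0 x1"
    using f by (simp_all add: pY1_given_Y0_0_def pY0_given_Y1_0_def pY1_def pY1D0_def pY1D1_def)
qed

lemma compat_dep:
  assumes "compatible S obs M"
  shows "\<And>x0 x1 x1'. (x0,x1) \<in> S \<Longrightarrow> (x0,x1') \<in> S \<Longrightarrow> P0 (M x0 x1) = P0 (M x0 x1')"
    "\<And>x0 x0' x1. (x0,x1) \<in> S \<Longrightarrow> (x0',x1) \<in> S \<Longrightarrow> P1 (M x0 x1) = P1 (M x0' x1)"
  using assms unfolding compatible_def P0_marg P1_marg by metis+

lemma mono_frac:
  fixes p t q :: real
  assumes "t \<le> q" "q < 1" "p \<le> 1"
  shows "(p - q) / (1 - q) \<le> (p - t) / (1 - t)"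
proof -
  have "(p - q) * (1 - t) \<le> (p - t) * (1 - q)"
  proof -
    have "0 \<le> (q - t) * (1 - p)" using assms by simp
    then show ?thesis by (simp add: algebra_simps)
  qed
  then show ?thesis using assms by (simp add: divide_simps)
qed

theorem mainTheorem10:
  fixes S :: "('a \<times> 'b) set"
    and obs :: "'a \<Rightarrow> 'b \<Rightarrow> (bool \<times> bool) pmf"
    and M0 :: "'a \<Rightarrow> 'b \<Rightarrow> (bool \<times> bool \<times> bool) pmf"
    and x0 :: 'a and x1 :: 'b
  assumes model: "compatible S obs M0"
    and xS: "(x0, x1) \<in> S"
    and d1: "1 - q0_low S obs x0 \<noteq> 0"
    and d2: "1 - q0_10_up S obs x0 \<noteq> 0"
    and d3: "1 - q1_low S obs x1 \<noteq> 0"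
    and d4: "1 - q1_11_up S obs x1 \<noteq> 0"
  defines "\<pi> \<equiv> pY1 obs x0 x1"
  shows
    "(\<forall>M. compatible S obs M \<longrightarrow>
        (\<pi> - q0_low S obs x0) / (1 - q0_low S obs x0) \<le> pY1_given_Y0_0 M x0 x1
      \<and> pY1_given_Y0_0 M x0 x1 \<le> (\<pi> - q0_10_up S obs x0) / (1 - q0_10_up S obs x0)
      \<and> (\<pi> - q1_low S obs x1) / (1 - q1_low S obs x1) \<le> pY0_given_Y1_0 M x0 x1
      \<and> pY0_given_Y1_0 M x0 x1 \<le> (\<pi> - q1_11_up S obs x1) / (1 - q1_11_up S obs x1))
   \<and> (\<exists>M. compatible S obs M \<and>
        pY1_given_Y0_0 M x0 x1 = (\<pi> - q0_low S obs x0) / (1 - q0_low S obs x0))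
   \<and> (\<exists>M. compatible S obs M \<and>
        pY1_given_Y0_0 M x0 x1 = (\<pi> - q0_10_up S obs x0) / (1 - q0_10_up S obs x0))
   \<and> (\<exists>M. compatible S obs M \<and>
        pY0_given_Y1_0 M x0 x1 = (\<pi> - q1_low S obs x1) / (1 - q1_low S obs x1))
   \<and> (\<exists>M. compatible S obs M \<and>
        pY0_given_Y1_0 M x0 x1 = (\<pi> - q1_11_up S obs x1) / (1 - q1_11_up S obs x1))"
proof -
  have pb: "0 \<le> pY1 obs a b" "pY1 obs a b \<le> 1" "0 \<le> pY1D0 obs a b" "0 \<le> pY1D1 obs a b"
    "pY1D0 obs a b \<le> 1" "pY1D1 obs a b \<le> 1" for a b
    by (simp_all add: pY1_def pY1D0_def pY1D1_def)
  have m1: "x1 \<in> supp1 S x0" and m0: "x0 \<in> supp0 S x1" using xS by (simp_all add: supp1_def supp0_def)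
  have bb1: "bdd_below (pY1 obs x0 ` supp1 S x0)" "bdd_above (pY1D0 obs x0 ` supp1 S x0)"
    using pb by (auto intro!: bdd_belowI2 bdd_aboveI2)
  have bb0: "bdd_below ((\<lambda>a. pY1 obs a x1) ` supp0 S x1)" "bdd_above ((\<lambda>a. pY1D1 obs a x1) ` supp0 S x1)"
    using pb by (auto intro!: bdd_belowI2 bdd_aboveI2)
  have lo0: "q0_low S obs x0 \<le> pY1 obs x0 b" if "b \<in> supp1 S x0" for b
    unfolding q0_low_def by (rule cINF_lower[OF bb1(1) that])
  have up0: "pY1D0 obs x0 b \<le> q0_10_up S obs x0" if "b \<in> supp1 S x0" for b
    unfolding q0_10_up_def by (rule cSUP_upper[OF that bb1(2)])
  have lo1: "q1_low S obs x1 \<le> pY1 obs a x1" if "a \<in> supp0 S x1" for a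
    unfolding q1_low_def by (rule cINF_lower[OF bb0(1) that])
  have up1: "pY1D1 obs a x1 \<le> q1_11_up S obs x1" if "a \<in> supp0 S x1" for a
    unfolding q1_11_up_def by (rule cSUP_upper[OF that bb0(2)])
  have gen: "q0_10_up S obs x0 \<le> P0 (M x0 x1) \<and> P0 (M x0 x1) \<le> q0_low S obs x0
     \<and> q1_11_up S obs x1 \<le> P1 (M x0 x1) \<and> P1 (M x0 x1) \<le> q1_low S obs x1"
    if M: "compatible S obs M" for M
  proof -
    have A: "pY1D0 obs x0 b \<le> P0 (M x0 x1) \<and> P0 (M x0 x1) \<le> pY1 obs x0 b" if "b \<in> supp1 S x0" for b
    proof -
      have "(x0,b) \<in> S" using that by (simp add: supp1_def)
      then show ?thesis using compat_facts[OF M, of x0 b] compat_dep(1)[OF M, of x0 x1 b] xS by simp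
    qed
    have B: "pY1D1 obs a x1 \<le> P1 (M x0 x1) \<and> P1 (M x0 x1) \<le> pY1 obs a x1" if "a \<in> supp0 S x1" for a
    proof -
      have "(a,x1) \<in> S" using that by (simp add: supp0_def)
      then show ?thesis using compat_facts[OF M, of a x1] compat_dep(2)[OF M, of x0 x1 a] xS by simp
    qed
    have "q0_10_up S obs x0 \<le> P0 (M x0 x1)" unfolding q0_10_up_def
      using m1 A by (intro cSUP_least) auto
    moreover have "P0 (M x0 x1) \<le> q0_low S obs x0" unfolding q0_low_def
      using m1 A by (intro cINF_greatest) auto
    moreover have "q1_11_up S obs x1 \<le> P1 (M x0 x1)" unfolding q1_11_up_def
      using m0 B by (intro cSUP_least) auto
    moreover have "P1 (M x0 x1) \<le> q1_low S obs x1" unfolding q1_low_def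
      using m0 B by (intro cINF_greatest) auto
    ultimately show ?thesis by simp
  qed
  have ql0: "q0_low S obs x0 < 1" using lo0[OF m1] pb(2)[of x0 x1] d1 by linarith
  have ql1: "q1_low S obs x1 < 1" using lo1[OF m0] pb(2)[of x0 x1] d3 by linarith
  have q0: "q0_10_up S obs x0 \<le> q0_low S obs x0" and q1: "q1_11_up S obs x1 \<le> q1_low S obs x1"
    using gen[OF model] by linarith+
  have pi1: "\<pi> \<le> 1" unfolding \<pi>_def by (rule pb(2))
  have part1: "(\<pi> - q0_low S obs x0) / (1 - q0_low S obs x0) \<le> pY1_given_Y0_0 M x0 x1
      \<and> pY1_given_Y0_0 M x0 x1 \<le> (\<pi> - q0_10_up S obs x0) / (1 - q0_10_up S obs x0)
      \<and> (\<pi> - q1_low S obs x1) / (1 - q1_low S obs x1) \<le> pY0_given_Y1_0 M x0 x1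
      \<and> pY0_given_Y1_0 M x0 x1 \<le> (\<pi> - q1_11_up S obs x1) / (1 - q1_11_up S obs x1)"
    if M: "compatible S obs M" for M
  proof -
    note g = gen[OF M]
    note c = compat_facts[OF M xS]
    show ?thesis unfolding c(1,2) \<pi>_def[symmetric]
      using mono_frac[of "P0 (M x0 x1)" "q0_low S obs x0" \<pi>]
        mono_frac[of "q0_10_up S obs x0" "P0 (M x0 x1)" \<pi>]
        mono_frac[of "P1 (M x0 x1)" "q1_low S obs x1" \<pi>]
        mono_frac[of "q1_11_up S obs x1" "P1 (M x0 x1)" \<pi>]
        g ql0 ql1 pi1 by linarith
  qed
  have ex0: "\<exists>M. compatible S obs M \<and> pY1_given_Y0_0 M x0 x1 = (\<pi> - t) / (1 - t)"
    if t: "q0_10_up S obs x0 \<le> t" "t \<le> q0_low S obs x0" for t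
  proof -
    define f0 where "f0 = (\<lambda>a b. if a = x0 then t else P0 (M0 a b))"
    define f1 where "f1 = (\<lambda>a b. P1 (M0 a b))"
    have bnd: "pY1D0 obs a b \<le> f0 a b \<and> f0 a b \<le> pY1 obs a b
        \<and> pY1D1 obs a b \<le> f1 a b \<and> f1 a b \<le> pY1 obs a b" if "(a,b) \<in> S" for a b
    proof (cases "a = x0")
      case True
      then have "b \<in> supp1 S x0" using that by (simp add: supp1_def)
      then show ?thesis using True up0 lo0 t compat_facts[OF model that] unfolding f0_def f1_def
        by force
    qed (use compat_facts[OF model that] f0_def f1_def in auto)
    have dep0: "f0 a b = f0 a b'" if "(a,b) \<in> S" "(a,b') \<in> S" for a b b'
      unfolding f0_def using compat_dep(1)[OF model that] by simp
    have dep1: "f1 a b = f1 a' b" if "(a,b) \<in> S" "(a',b) \<in> S" for a a' b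
      unfolding f1_def using compat_dep(2)[OF model that] by simp
    have mf: "compatible S obs (mk S obs f0 f1)" "P0 (mk S obs f0 f1 x0 x1) = f0 x0 x1"
      "P1 (mk S obs f0 f1 x0 x1) = f1 x0 x1"
      by (rule mk_facts[of S obs f0 f1]; (rule bnd dep0 dep1 xS; assumption)?)+
    show ?thesis
      by (rule exI[of _ "mk S obs f0 f1"])
        (use mf(1) compat_facts(1)[OF mf(1) xS] mf(2) in \<open>simp add: f0_def \<pi>_def\<close>)
  qed
  have ex1: "\<exists>M. compatible S obs M \<and> pY0_given_Y1_0 M x0 x1 = (\<pi> - t) / (1 - t)"
    if t: "q1_11_up S obs x1 \<le> t" "t \<le> q1_low S obs x1" for t
  proof -
    define f0 where "f0 = (\<lambda>a b. P0 (M0 a b))"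
    define f1 where "f1 = (\<lambda>a b. if b = x1 then t else P1 (M0 a b))"
    have bnd: "pY1D0 obs a b \<le> f0 a b \<and> f0 a b \<le> pY1 obs a b
        \<and> pY1D1 obs a b \<le> f1 a b \<and> f1 a b \<le> pY1 obs a b" if "(a,b) \<in> S" for a b
    proof (cases "b = x1")
      case True
      then have "a \<in> supp0 S x1" using that by (simp add: supp0_def)
      then show ?thesis using True up1 lo1 t compat_facts[OF model that] unfolding f0_def f1_def
        by force
    qed (use compat_facts[OF model that] f0_def f1_def in auto)
    have dep0: "f0 a b = f0 a b'" if "(a,b) \<in> S" "(a,b') \<in> S" for a b b'
      unfolding f0_def using compat_dep(1)[OF model that] by simp
    have dep1: "f1 a b = f1 a' b" if "(a,b) \<in> S" "(a',b) \<in> S" for a a' b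
      unfolding f1_def using compat_dep(2)[OF model that] by simp
    have mf: "compatible S obs (mk S obs f0 f1)" "P0 (mk S obs f0 f1 x0 x1) = f0 x0 x1"
      "P1 (mk S obs f0 f1 x0 x1) = f1 x0 x1"
      by (rule mk_facts[of S obs f0 f1]; (rule bnd dep0 dep1 xS; assumption)?)+
    show ?thesis
      by (rule exI[of _ "mk S obs f0 f1"])
        (use mf(1) compat_facts(2)[OF mf(1) xS] mf(3) in \<open>simp add: f1_def \<pi>_def\<close>)
  qed
  show ?thesis
    using part1 ex0[of "q0_low S obs x0"] ex0[of "q0_10_up S obs x0"]
      ex1[of "q1_low S obs x1"] ex1[of "q1_11_up S obs x1"] q0 q1 by auto
qed

end
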